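(* Let $\mathcal M=(\mathcal H_A,\xi,\mathcal E,\mathsf Z)$ be a measurement scheme constrained by the third law that implements an extremal instrument $\mathcal I$ on $\mathcal H_S$. Then for every outcome $x$ and every $B\in\mathcal L(\mathcal H_S)$, $$\mathcal E^*(B\otimes\mathsf Z_x)=\mathcal I_x^*(B)\otimes\mathbb 1_A.$$
   Context: All Hilbert spaces are finite-dimensional and complex. A state is a positive operator of unit trace; it is full-rank if it is positive definite. A channel is a completely positive trace-preserving linear map, with dual $\Phi^*$ defined by $\mathrm{tr}[A\Phi(B)]=\mathrm{tr}[\Phi^*(A)B]$. A channel is constrained by the third law if it maps every full-rank state on its input space to a full-rank state on its output space. Let $2\le\dim\mathcal H_S<\infty$. An instrument with finite outcome set $\mathcal X$ is a family $\{\mathcal I_x\}_{x\in\mathcal X}$ of completely positive maps on $\mathcal L(\mathcal H_S)$ whose sum is trace-preserving. A measurement scheme $(\mathcal H_A,\xi,\mathcal E,\mathsf Z)$ consists of: - a finite-dimensional $\mathcal H_A$; - a state $\xi$ on $\mathcal H_A$; - a channel $\mathcal E$ on $\mathcal L(\mathcal H_S\otimes\mathcal H_A)$; - positive operators $\{\mathsf Z_x\}_{x\in\mathcal X}$ on $\mathcal H_A$ summing to $\mathbb 1$. It implements $\mathcal I_x(\rho)=\mathrm{tr}_A[(\mathbb 1\otimes\mathsf Z_x)\mathcal E(\rho\otimes\xi)]$. It is constrained by the third law if $\xi$ is full-rank and $\mathcal E$ is constrained by the third law. An instrument $\mathcal I$ is extremal if the following holds: whenever $\mathcal I_x=\lambda\mathcal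 I^{(1)}_x+(1-\lambda)\mathcal I^{(2)}_x$ for all $x$, with $\lambda\in(0,1)$ and $\mathcal I^{(1)},\mathcal I^{(2)}$ instruments with the same outcome set, then $\mathcal I^{(1)}=\mathcal I^{(2)}=\mathcal I$. *)

theory Defs
  imports Complex_Main
begin

text \<open>Operators on a finite-dimensional Hilbert space with orthonormal basis indexed by
  a finite type (or a finite index set) are represented as matrices, i.e. functions
  from pairs of indices to complex numbers.\<close>

type_synonym 'i op = "'i \<Rightarrow> 'i \<Rightarrow> complex"

definition mmult :: "'i::finite op \<Rightarrow> 'i op \<Rightarrow> 'i op" (infixl "**\<^sub>m" 70) where
  "A **\<^sub>m B = (\<lambda>i j. \<Sum>k\<in>UNIV. A i k * B k j)"

definition idop :: "'i op" where
  "idop = (\<lambda>i j. if i = j then 1 else 0)"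

definition tr :: "'i::finite op \<Rightarrow> complex" where
  "tr A = (\<Sum>i\<in>UNIV. A i i)"

definition qform :: "'i set \<Rightarrow> 'i op \<Rightarrow> ('i \<Rightarrow> complex) \<Rightarrow> complex" where
  "qform I A v = (\<Sum>i\<in>I. \<Sum>j\<in>I. cnj (v i) * A i j * v j)"

definition psd_on :: "'i set \<Rightarrow> 'i op \<Rightarrow> bool" where
  "psd_on I A \<longleftrightarrow> (\<forall>v. Im (qform I A v) = 0 \<and> Re (qform I A v) \<ge> 0)"

definition positive_op :: "'i::finite op \<Rightarrow> bool" where
  "positive_op A \<longleftrightarrow> psd_on UNIV A"

definition positive_definite :: "'i::finite op \<Rightarrow> bool" where
  "positive_definite A \<longleftrightarrow> positive_op A \<and>
     (\<forall>v. v \<noteq> (\<lambda>_. 0) \<longrightarrow> Re (qform UNIV A v) > 0)"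

definition is_state :: "'i::finite op \<Rightarrow> bool" where
  "is_state \<rho> \<longleftrightarrow> positive_op \<rho> \<and> tr \<rho> = 1"

definition full_rank_state :: "'i::finite op \<Rightarrow> bool" where
  "full_rank_state \<rho> \<longleftrightarrow> is_state \<rho> \<and> positive_definite \<rho>"

definition clinear_map :: "('i op \<Rightarrow> 'j op) \<Rightarrow> bool" where
  "clinear_map \<Phi> \<longleftrightarrow>
     (\<forall>A B c. \<Phi> (\<lambda>i j. c * A i j + B i j) = (\<lambda>i j. c * \<Phi> A i j + \<Phi> B i j))"

text \<open>Amplification id_n \<otimes> \<Phi>: an operator on C^n \<otimes> H is a block matrix indexed by
  (nat \<times> 'i) with blocks indexed by k,l < n; \<Phi> is applied blockwise.\<close>
definition ampl :: "('i op \<Rightarrow> 'j op) \<Rightarrow> (nat \<times> 'i) op \<Rightarrow> (nat \<times> 'j) op" where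
  "ampl \<Phi> X = (\<lambda>(k, j) (l, j'). \<Phi> (\<lambda>i i'. X (k, i) (l, i')) j j')"

definition completely_positive :: "('i::finite op \<Rightarrow> 'j::finite op) \<Rightarrow> bool" where
  "completely_positive \<Phi> \<longleftrightarrow> clinear_map \<Phi> \<and>
     (\<forall>n X. psd_on ({..<n} \<times> UNIV) X \<longrightarrow> psd_on ({..<n} \<times> UNIV) (ampl \<Phi> X))"

definition trace_preserving :: "('i::finite op \<Rightarrow> 'j::finite op) \<Rightarrow> bool" where
  "trace_preserving \<Phi> \<longleftrightarrow> (\<forall>A. tr (\<Phi> A) = tr A)"

definition channel :: "('i::finite op \<Rightarrow> 'j::finite op) \<Rightarrow> bool" where
  "channel \<Phi> \<longleftrightarrow> completely_positive \<Phi> \<and> trace_preserving \<Phi>"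

definition dual_map :: "('i::finite op \<Rightarrow> 'j::finite op) \<Rightarrow> 'j op \<Rightarrow> 'i op" where
  "dual_map \<Phi> A = (THE D. \<forall>B. tr (A **\<^sub>m \<Phi> B) = tr (D **\<^sub>m B))"

definition third_law_channel :: "('i::finite op \<Rightarrow> 'j::finite op) \<Rightarrow> bool" where
  "third_law_channel \<Phi> \<longleftrightarrow> channel \<Phi> \<and>
     (\<forall>\<rho>. full_rank_state \<rho> \<longrightarrow> full_rank_state (\<Phi> \<rho>))"

definition tensor :: "'i op \<Rightarrow> 'a op \<Rightarrow> ('i \<times> 'a) op" (infixr "\<otimes>\<^sub>o" 75) where
  "A \<otimes>\<^sub>o B = (\<lambda>(i, a) (j, b). A i j * B a b)"

definition ptrace_A :: "('i \<times> 'a::finite) op \<Rightarrow> 'i op" where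
  "ptrace_A M = (\<lambda>i j. \<Sum>a\<in>UNIV. M (i, a) (j, a))"

definition instrument :: "('x::finite \<Rightarrow> 's::finite op \<Rightarrow> 's op) \<Rightarrow> bool" where
  "instrument \<I> \<longleftrightarrow> (\<forall>x. completely_positive (\<I> x)) \<and>
     trace_preserving (\<lambda>\<rho>. (\<lambda>i j. \<Sum>x\<in>UNIV. \<I> x \<rho> i j))"

definition extremal_instrument :: "('x::finite \<Rightarrow> 's::finite op \<Rightarrow> 's op) \<Rightarrow> bool" where
  "extremal_instrument \<I> \<longleftrightarrow> instrument \<I> \<and>
     (\<forall>\<I>1 \<I>2 (t::real). instrument \<I>1 \<and> instrument \<I>2 \<and> 0 < t \<and> t < 1 \<and>
        (\<forall>x \<rho>. \<I> x \<rho> = (\<lambda>i j. complex_of_real t * \<I>1 x \<rho> i j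
                              + complex_of_real (1 - t) * \<I>2 x \<rho> i j))
        \<longrightarrow> \<I>1 = \<I> \<and> \<I>2 = \<I>)"

text \<open>Measurement scheme (H_A, \<xi>, E, Z); H_A has basis indexed by the finite type 'a.\<close>
definition measurement_scheme ::
  "'a::finite op \<Rightarrow> (('s::finite \<times> 'a) op \<Rightarrow> ('s \<times> 'a) op) \<Rightarrow> ('x::finite \<Rightarrow> 'a op) \<Rightarrow> bool" where
  "measurement_scheme \<xi> E Z \<longleftrightarrow> is_state \<xi> \<and> channel E \<and> (\<forall>x. positive_op (Z x)) \<and>
     (\<lambda>i j. \<Sum>x\<in>UNIV. Z x i j) = idop"

definition implements ::
  "'a::finite op \<Rightarrow> (('s::finite \<times> 'a) op \<Rightarrow> ('s \<times> 'a) op) \<Rightarrow> ('x::finite \<Rightarrow> 'a op)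
     \<Rightarrow> ('x \<Rightarrow> 's op \<Rightarrow> 's op) \<Rightarrow> bool" where
  "implements \<xi> E Z \<I> \<longleftrightarrow>
     (\<forall>x \<rho>. \<I> x \<rho> = ptrace_A ((idop \<otimes>\<^sub>o Z x) **\<^sub>m E (\<rho> \<otimes>\<^sub>o \<xi>)))"

definition third_law_scheme ::
  "'a::finite op \<Rightarrow> (('s::finite \<times> 'a) op \<Rightarrow> ('s \<times> 'a) op) \<Rightarrow> ('x::finite \<Rightarrow> 'a op) \<Rightarrow> bool" where
  "third_law_scheme \<xi> E Z \<longleftrightarrow> full_rank_state \<xi> \<and> third_law_channel E"

end

theory Submission
  imports Defs "HOL-Analysis.Analysis"
begin


lemma sum_delta_r: "(\<Sum>j\<in>(UNIV::'a::finite set). f j * (if j = p then 1 else 0)) = (f p :: 'b::comm_ring_1)"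
proof -
  have "(\<Sum>j\<in>(UNIV::'a set). f j * (if j = p then 1 else 0)) = (\<Sum>j\<in>UNIV. if j = p then f j else 0)"
    by (rule sum.cong) auto
  thus ?thesis by simp
qed

lemma sum_delta_l: "(\<Sum>j\<in>(UNIV::'a::finite set). (if j = p then 1 else 0) * f j) = (f p :: 'b::comm_ring_1)"
  using sum_delta_r[of f p] by (simp add: mult.commute)

lemma cnj_delta[simp]: "cnj (if i = a then 1 else 0) = (if i = a then 1 else (0::complex))"
  by simp

lemma qform_shift:
  fixes Z :: "'a::finite op"
  shows "qform UNIV Z (\<lambda>i. v i + t * (if i = p then 1 else 0)) =
     qform UNIV Z v + cnj t * (\<Sum>j\<in>UNIV. Z p j * v j) + t * (\<Sum>i\<in>UNIV. cnj (v i) * Z i p)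
     + cnj t * t * Z p p"
proof -
  have "qform UNIV Z (\<lambda>i. v i + t * (if i = p then 1 else 0)) =
    (\<Sum>i\<in>UNIV. \<Sum>j\<in>UNIV. cnj (v i) * Z i j * v j + (cnj (v i) * Z i j * t) * (if j = p then 1 else 0)
      + (if i = p then 1 else 0) * (cnj t * Z i j * v j) + (if i = p then 1 else 0) * ((if j = p then 1 else 0) * (cnj t * Z i j * t)))"
    unfolding qform_def by (rule sum.cong, simp, rule sum.cong, simp, simp add: algebra_simps)
  also have "\<dots> = qform UNIV Z v + (\<Sum>i\<in>UNIV. cnj (v i) * Z i p * t) + (\<Sum>j\<in>UNIV. cnj t * Z p j * v j) + cnj t * Z p p * t"
    unfolding qform_def by (simp add: sum.distrib sum_delta_r sum_delta_l flip: sum_distrib_left)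
  finally show ?thesis by (simp add: sum_distrib_left sum_distrib_right algebra_simps)
qed

lemma qform_unit:
  fixes Z :: "'a::finite op"
  shows "qform UNIV Z (\<lambda>i. if i = a then 1 else 0) = Z a a"
  unfolding qform_def by (simp add: sum_delta_r sum_delta_l flip: sum_distrib_left sum_distrib_right)

lemma psd_herm:
  fixes Z :: "'a::finite op"
  assumes "psd_on UNIV Z"
  shows "Z a b = cnj (Z b a)"
proof -
  have q: "\<And>t. qform UNIV Z (\<lambda>i. (if i = a then 1 else 0) + t * (if i = b then 1 else 0))
     = Z a a + cnj t * Z b a + t * Z a b + cnj t * t * Z b b"
    by (subst qform_shift) (simp add: qform_unit sum_delta_r sum_delta_l)
  have z0: "\<And>t p. qform UNIV Z (\<lambda>i. 0 + t * (if i = p then 1 else 0)) = cnj t * t * Z p p"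
    by (subst qform_shift) (simp add: qform_def)
  have zb: "\<And>p. Im (Z p p) = 0" using assms z0[of 1] unfolding psd_on_def by (metis mult_1 complex_cnj_one)
  have im: "\<And>v. Im (qform UNIV Z v) = 0" using assms unfolding psd_on_def by blast
  have 1: "Im (Z a a + Z b a + Z a b + Z b b) = 0" using im[of "(\<lambda>i. (if i = a then 1 else 0) + 1 * (if i = b then 1 else 0))"] q[of 1] by (simp only:) simp
  have 2: "Im (Z a a - \<i> * Z b a + \<i> * Z a b + Z b b) = 0" using im[of "(\<lambda>i. (if i = a then 1 else 0) + \<i> * (if i = b then 1 else 0))"] q[of \<i>] by (simp only:) simp
  show ?thesis using 1 2 zb[of a] zb[of b] by (simp add: complex_eq_iff)
qed




lemma herm_sum_cnj:
  fixes Z :: "'a::finite op"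
  assumes "psd_on UNIV Z"
  shows "(\<Sum>i\<in>UNIV. cnj (v i) * Z i p) = cnj (\<Sum>j\<in>UNIV. Z p j * v j)"
  by (simp add: psd_herm[OF assms, of _ p] mult.commute)

lemma gram_aux:
  fixes F :: "'a::finite set"
  assumes "finite F"
  shows "\<forall>Z::'a op. psd_on UNIV Z \<and> (\<forall>a b. a \<notin> F \<or> b \<notin> F \<longrightarrow> Z a b = 0) \<longrightarrow>
          (\<exists>W. \<forall>a b. Z a b = (\<Sum>m\<in>F. W m a * cnj (W m b)))"
  using assms
proof (induction F rule: finite_induct)
  case empty
  then show ?case by auto
next
  case (insert p F)
  show ?case
  proof (intro allI impI)
    fix Z :: "'a op"
    assume A: "psd_on UNIV Z \<and> (\<forall>a b. a \<notin> insert p F \<or> b \<notin> insert p F \<longrightarrow> Z a b = 0)"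
    hence psd: "psd_on UNIV Z" and supp: "\<And>a b. a \<notin> insert p F \<or> b \<notin> insert p F \<Longrightarrow> Z a b = 0" by auto
    have H: "\<And>a b. Z a b = cnj (Z b a)" using psd_herm[OF psd] .
    have ps: "\<And>v. Im (qform UNIV Z v) = 0 \<and> Re (qform UNIV Z v) \<ge> 0" using psd unfolding psd_on_def by blast
    have qs: "\<And>v t. qform UNIV Z (\<lambda>i. v i + t * (if i = p then 1 else 0)) =
     qform UNIV Z v + cnj t * (\<Sum>j\<in>UNIV. Z p j * v j) + t * cnj (\<Sum>j\<in>UNIV. Z p j * v j)
     + cnj t * t * Z p p"
      by (simp only: qform_shift herm_sum_cnj[OF psd])
    have ppim: "Im (Z p p) = 0" using ps[of "\<lambda>i. if i = p then 1 else 0"] by (simp add: qform_unit)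
    have pp: "Z p p = complex_of_real (Re (Z p p))" using ppim by (simp add: complex_eq_iff)
    have ppge: "Re (Z p p) \<ge> 0" using ps[of "\<lambda>i. if i = p then 1 else 0"] by (simp add: qform_unit)
    show "\<exists>W. \<forall>a b. Z a b = (\<Sum>m\<in>insert p F. W m a * cnj (W m b))"
    proof (cases "Z p p = 0")
      case True
      have row: "Z p b = 0" for b
      proof (rule ccontr)
        assume nz: "Z p b \<noteq> 0"
        define s where "s = Z p b"
        define x where "x = (\<bar>Re (Z b b)\<bar> + 1) / (2 * (cmod s)^2)"
        have sp: "cmod s > 0" using nz s_def by simp
        have "qform UNIV Z (\<lambda>i. (if i = b then 1 else 0) + (- of_real x * s) * (if i = p then 1 else 0))
              = Z b b + cnj (- of_real x * s) * s + (- of_real x * s) * cnj s"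
          using qs[of "\<lambda>i. if i = b then 1 else 0" "- of_real x * s"] True
          by (simp add: qform_unit sum_delta_r s_def)
        also have "\<dots> = Z b b - of_real x * (s * cnj s) - of_real x * (s * cnj s)"
          by (simp add: algebra_simps)
        also have "\<dots> = Z b b - of_real (2 * x * (cmod s)^2)"
          by (simp only: complex_norm_square[symmetric]) (simp add: algebra_simps)
        finally have "Re (Z b b) - 2 * x * (cmod s)^2 \<ge> 0"
          using ps[of "\<lambda>i. (if i = b then 1 else 0) + (- of_real x * s) * (if i = p then 1 else 0)"] by simp
        moreover have "2 * x * (cmod s)^2 = \<bar>Re (Z b b)\<bar> + 1" using sp unfolding x_def by simp
        ultimately show False by linarith
      qed
      have col: "Z a p = 0" for a using H[of a p] row[of a] by simp
      have suppF: "\<forall>a b. a \<notin> F \<or> b \<notin> F \<longrightarrow> Z a b = 0"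
      proof (intro allI impI)
        fix a b assume "a \<notin> F \<or> b \<notin> F"
        then consider "a = p" | "b = p" | "a \<notin> insert p F" | "b \<notin> insert p F" by auto
        then show "Z a b = 0"
          by cases (auto simp: row col supp)
      qed
      obtain W where W: "\<forall>a b. Z a b = (\<Sum>m\<in>F. W m a * cnj (W m b))"
        using insert.IH psd suppF by blast
      show ?thesis
      proof (rule exI[of _ "W(p := (\<lambda>_. 0))"], intro allI)
        fix a b
        have e: "(\<Sum>m\<in>F. (W(p:=(\<lambda>_. 0))) m a * cnj ((W(p:=(\<lambda>_. 0))) m b)) = (\<Sum>m\<in>F. W m a * cnj (W m b))"
          using insert.hyps by (intro sum.cong) auto
        show "Z a b = (\<Sum>m\<in>insert p F. (W(p:=(\<lambda>_. 0))) m a * cnj ((W(p:=(\<lambda>_. 0))) m b))"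
          using W insert.hyps e by (simp add: sum.insert)
      qed
    next
      case False
      define r where "r = Re (Z p p)"
      have rpos: "r > 0" using False pp ppge r_def by (metis less_eq_real_def of_real_0)
      define w where "w a = Z a p / complex_of_real (sqrt r)" for a
      define Z' where "Z' a b = Z a b - w a * cnj (w b)" for a b
      have ww: "w a * cnj (w b) = Z a p * Z p b / complex_of_real r" for a b
      proof -
        have "w a * cnj (w b) = Z a p * cnj (Z b p) / (complex_of_real (sqrt r) * complex_of_real (sqrt r))"
          unfolding w_def by simp
        also have "complex_of_real (sqrt r) * complex_of_real (sqrt r) = complex_of_real r"
          using rpos by (simp only: of_real_mult[symmetric]) simp
        finally show ?thesis using H[of p b] by simp
      qed
      have Z'_q: "qform UNIV Z' v = qform UNIV Z (\<lambda>i. v i + (- (\<Sum>j\<in>UNIV. Z p j * v j) / of_real r) * (if i = p then 1 else 0))" for v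
      proof -
        define s where "s = (\<Sum>j\<in>UNIV. Z p j * v j)"
        have "qform UNIV Z' v = qform UNIV Z v - (\<Sum>i\<in>UNIV. \<Sum>j\<in>UNIV. (cnj (v i) * Z i p) * (Z p j * v j) / of_real r)"
          unfolding qform_def Z'_def ww by (simp add: algebra_simps sum_subtractf)
        also have "(\<Sum>i\<in>UNIV. \<Sum>j\<in>UNIV. (cnj (v i) * Z i p) * (Z p j * v j) / of_real r) =
           (\<Sum>i\<in>UNIV. cnj (v i) * Z i p) * s / of_real r"
          unfolding s_def by (simp add: sum_distrib_left sum_distrib_right sum_divide_distrib) (rule sum.swap)
        also have "(\<Sum>i\<in>UNIV. cnj (v i) * Z i p) = cnj s" unfolding s_def using herm_sum_cnj[OF psd] .
        finally have 1: "qform UNIV Z' v = qform UNIV Z v - cnj s * s / of_real r" .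
        have 2: "qform UNIV Z (\<lambda>i. v i + (- s / of_real r) * (if i = p then 1 else 0))
          = qform UNIV Z v + cnj (- s / of_real r) * s + (- s / of_real r) * cnj s + cnj (- s / of_real r) * (- s / of_real r) * of_real r"
          using qs[of v "- s / of_real r"] pp unfolding s_def r_def by simp
        have 3: "cnj (- s / of_real r) * s + (- s / of_real r) * cnj s + cnj (- s / of_real r) * (- s / of_real r) * of_real r
           = - cnj s * s / of_real r" using rpos by (simp add: field_simps power2_eq_square)
        show ?thesis using 1 2 3 unfolding s_def by simp
      qed
      have psd': "psd_on UNIV Z'" unfolding psd_on_def Z'_q using ps by blast
      have rowp: "Z' p b = 0" for b unfolding Z'_def ww using pp rpos r_def False by (simp add: field_simps)
      have colp: "Z' a p = 0" for a unfolding Z'_def ww using pp rpos r_def False by (simp add: field_simps)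
      have suppF: "\<forall>a b. a \<notin> F \<or> b \<notin> F \<longrightarrow> Z' a b = 0"
      proof (intro allI impI)
        fix a b assume "a \<notin> F \<or> b \<notin> F"
        then consider "a = p" | "b = p" | "a \<notin> insert p F" | "b \<notin> insert p F" by auto
        then show "Z' a b = 0"
          by cases (simp add: rowp, simp add: colp, simp_all add: Z'_def ww supp)
      qed
      obtain W where W: "\<forall>a b. Z' a b = (\<Sum>m\<in>F. W m a * cnj (W m b))"
        using insert.IH psd' suppF by blast
      show ?thesis
      proof (rule exI[of _ "W(p := w)"], intro allI)
        fix a b
        have e: "(\<Sum>m\<in>F. (W(p:=w)) m a * cnj ((W(p:=w)) m b)) = (\<Sum>m\<in>F. W m a * cnj (W m b))"
          using insert.hyps by (intro sum.cong) auto
        have "Z a b = Z' a b + w a * cnj (w b)" unfolding Z'_def by simp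
        also have "\<dots> = (\<Sum>m\<in>insert p F. (W(p := w)) m a * cnj ((W(p := w)) m b))"
          using W insert.hyps e by (simp add: sum.insert add.commute)
        finally show "Z a b = (\<Sum>m\<in>insert p F. (W(p := w)) m a * cnj ((W(p := w)) m b))" .
      qed
    qed
  qed
qed

lemma gram:
  fixes Z :: "'a::finite op"
  assumes "positive_op Z"
  shows "\<exists>W::'a\<Rightarrow>'a\<Rightarrow>complex. \<forall>a b. Z a b = (\<Sum>m\<in>UNIV. W m a * cnj (W m b))"
proof -
  have "\<forall>Z::'a op. psd_on UNIV Z \<and> (\<forall>a b. a \<notin> UNIV \<or> b \<notin> UNIV \<longrightarrow> Z a b = 0) \<longrightarrow>
          (\<exists>W::'a\<Rightarrow>'a\<Rightarrow>complex. \<forall>a b. Z a b = (\<Sum>m\<in>UNIV. W m a * cnj (W m b)))" using gram_aux[of "UNIV::'a set"] by simp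
  thus ?thesis using assms unfolding positive_op_def by blast
qed




lemma cl_rule:
  assumes "clinear_map \<Phi>"
  shows "\<Phi> (\<lambda>i j. c * A i j + B i j) = (\<lambda>i j. c * \<Phi> A i j + \<Phi> B i j)"
  using assms unfolding clinear_map_def by blast

lemma swap4:
  "(\<Sum>k\<in>A. \<Sum>l\<in>B. \<Sum>p\<in>C. \<Sum>q\<in>D. f k l p q) = (\<Sum>p\<in>C. \<Sum>q\<in>D. \<Sum>k\<in>A. \<Sum>l\<in>B. f k l p q)"
proof -
  have 1: "(\<Sum>k\<in>A. \<Sum>l\<in>B. \<Sum>p\<in>C. \<Sum>q\<in>D. f k l p q) = (\<Sum>k\<in>A. \<Sum>p\<in>C. \<Sum>l\<in>B. \<Sum>q\<in>D. f k l p q)"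
    by (rule sum.cong[OF refl], rule sum.swap)
  have 2: "\<And>k p. (\<Sum>l\<in>B. \<Sum>q\<in>D. f k l p q) = (\<Sum>q\<in>D. \<Sum>l\<in>B. f k l p q)"
    by (rule sum.swap)
  have 3: "(\<Sum>k\<in>A. \<Sum>p\<in>C. \<Sum>q\<in>D. \<Sum>l\<in>B. f k l p q) = (\<Sum>p\<in>C. \<Sum>k\<in>A. \<Sum>q\<in>D. \<Sum>l\<in>B. f k l p q)"
    by (rule sum.swap)
  have 4: "\<And>p. (\<Sum>k\<in>A. \<Sum>q\<in>D. \<Sum>l\<in>B. f k l p q) = (\<Sum>q\<in>D. \<Sum>k\<in>A. \<Sum>l\<in>B. f k l p q)"
    by (rule sum.swap)
  show ?thesis unfolding 1 2 3 4 ..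
qed

lemma cl_zero:
  assumes "clinear_map \<Phi>"
  shows "\<Phi> (\<lambda>i j. 0) = (\<lambda>i j. 0)"
proof -
  have "\<Phi> (\<lambda>i j. 1 * 0 + 0) = (\<lambda>i j. 1 * \<Phi> (\<lambda>i j. 0) i j + \<Phi> (\<lambda>i j. 0) i j)"
    using cl_rule[OF assms, of 1 "\<lambda>i j. 0" "\<lambda>i j. 0"] by simp
  hence "\<Phi> (\<lambda>i j. 0) = (\<lambda>i j. \<Phi> (\<lambda>i j. 0) i j + \<Phi> (\<lambda>i j. 0) i j)" by simp
  hence "\<And>i j. \<Phi> (\<lambda>i j. 0) i j = \<Phi> (\<lambda>i j. 0) i j + \<Phi> (\<lambda>i j. 0) i j" by metis
  thus ?thesis by (intro ext) simp
qed

lemma cl_scale: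
  assumes "clinear_map \<Phi>"
  shows "\<Phi> (\<lambda>i j. c * A i j) = (\<lambda>i j. c * \<Phi> A i j)"
proof -
  have "\<Phi> (\<lambda>i j. c * A i j + 0) = (\<lambda>i j. c * \<Phi> A i j + \<Phi> (\<lambda>i j. 0) i j)"
    using cl_rule[OF assms, of c A "\<lambda>i j. 0"] by simp
  thus ?thesis using cl_zero[OF assms] by simp
qed

lemma cl_add:
  assumes "clinear_map \<Phi>"
  shows "\<Phi> (\<lambda>i j. A i j + B i j) = (\<lambda>i j. \<Phi> A i j + \<Phi> B i j)"
proof -
  have "\<Phi> (\<lambda>i j. 1 * A i j + B i j) = (\<lambda>i j. 1 * \<Phi> A i j + \<Phi> B i j)"
    using cl_rule[OF assms, of 1 A B] by simp
  thus ?thesis by simp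
qed

lemma cl_sum:
  assumes "clinear_map \<Phi>" and "finite F"
  shows "\<Phi> (\<lambda>i j. \<Sum>m\<in>F. f m i j) = (\<lambda>i j. \<Sum>m\<in>F. \<Phi> (f m) i j)"
  using assms(2)
proof (induction F rule: finite_induct)
  case empty
  then show ?case using cl_zero[OF assms(1)] by simp
next
  case (insert x F)
  have "\<Phi> (\<lambda>i j. \<Sum>m\<in>insert x F. f m i j) = \<Phi> (\<lambda>i j. f x i j + (\<Sum>m\<in>F. f m i j))"
    using insert.hyps by simp
  also have "\<dots> = (\<lambda>i j. \<Phi> (f x) i j + \<Phi> (\<lambda>i j. \<Sum>m\<in>F. f m i j) i j)"
    using cl_add[OF assms(1), of "f x" "\<lambda>i j. \<Sum>m\<in>F. f m i j"] by simp
  also have "\<dots> = (\<lambda>i j. \<Sum>m\<in>insert x F. \<Phi> (f m) i j)"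
    using insert by simp
  finally show ?case .
qed

definition munit :: "'i \<Rightarrow> 'i \<Rightarrow> 'i op" where
  "munit p q = (\<lambda>i j. if i = p \<and> j = q then 1 else 0)"

lemma munit_expand:
  fixes A :: "'i::finite op"
  shows "A = (\<lambda>i j. \<Sum>p\<in>UNIV. \<Sum>q\<in>UNIV. A p q * munit p q i j)"
proof (intro ext)
  fix i j
  have "(\<Sum>p\<in>UNIV. \<Sum>q\<in>UNIV. A p q * munit p q i j) = (\<Sum>p\<in>UNIV. if p = i then A p j else 0)"
    unfolding munit_def by (intro sum.cong) (auto simp: if_distrib cong: if_cong)
  thus "A i j = (\<Sum>p\<in>UNIV. \<Sum>q\<in>UNIV. A p q * munit p q i j)" by simp
qed

lemma cl_expand:
  fixes A :: "'i::finite op"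
  assumes "clinear_map \<Phi>"
  shows "\<Phi> A = (\<lambda>i j. \<Sum>p\<in>UNIV. \<Sum>q\<in>UNIV. A p q * \<Phi> (munit p q) i j)"
proof -
  have "\<Phi> A = \<Phi> (\<lambda>i j. \<Sum>p\<in>UNIV. \<Sum>q\<in>UNIV. A p q * munit p q i j)"
    by (rule arg_cong[where f=\<Phi>], rule munit_expand)
  also have "\<dots> = (\<lambda>i j. \<Sum>p\<in>UNIV. \<Phi> (\<lambda>i j. \<Sum>q\<in>UNIV. A p q * munit p q i j) i j)"
    by (rule cl_sum[OF assms]) simp
  also have "\<dots> = (\<lambda>i j. \<Sum>p\<in>UNIV. \<Sum>q\<in>UNIV. \<Phi> (\<lambda>i j. A p q * munit p q i j) i j)"
    by (subst cl_sum[OF assms]) simp_all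
  also have "\<dots> = (\<lambda>i j. \<Sum>p\<in>UNIV. \<Sum>q\<in>UNIV. A p q * \<Phi> (munit p q) i j)"
    by (subst cl_scale[OF assms]) simp
  finally show ?thesis .
qed

lemma tr_munit:
  fixes D :: "'i::finite op"
  shows "tr (D **\<^sub>m munit p q) = D q p"
proof -
  have "tr (D **\<^sub>m munit p q) = (\<Sum>i\<in>UNIV. \<Sum>k\<in>UNIV. if i = q \<and> k = p then D i k else 0)"
    unfolding tr_def mmult_def munit_def by (intro sum.cong) auto
  also have "\<dots> = (\<Sum>i\<in>UNIV. if i = q then D q p else 0)"
    by (rule sum.cong[OF refl], case_tac "x = q") simp_all
  also have "\<dots> = D q p" by simp
  finally show ?thesis .
qed

lemma dual_unique:
  fixes D1 D2 :: "'i::finite op"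
  assumes "\<forall>B. tr (D1 **\<^sub>m B) = tr (D2 **\<^sub>m B)"
  shows "D1 = D2"
proof (intro ext)
  fix q p show "D1 q p = D2 q p" using assms[rule_format, of "munit p q"] by (simp add: tr_munit)
qed

lemma dual_exists:
  fixes \<Phi> :: "'i::finite op \<Rightarrow> 'j::finite op"
  assumes "clinear_map \<Phi>"
  shows "\<exists>D. \<forall>B. tr (A **\<^sub>m \<Phi> B) = tr (D **\<^sub>m B)"
proof
  define D where "D = (\<lambda>q p. tr (A **\<^sub>m \<Phi> (munit p q)))"
  show "\<forall>B. tr (A **\<^sub>m \<Phi> B) = tr (D **\<^sub>m B)"
  proof
    fix B :: "'i op"
    have "tr (A **\<^sub>m \<Phi> B) = (\<Sum>k\<in>UNIV. \<Sum>l\<in>UNIV. A k l * (\<Sum>p\<in>UNIV. \<Sum>q\<in>UNIV. B p q * \<Phi> (munit p q) l k))"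
      unfolding tr_def mmult_def by (subst cl_expand[OF assms]) simp
    also have "\<dots> = (\<Sum>k\<in>UNIV. \<Sum>l\<in>UNIV. \<Sum>p\<in>UNIV. \<Sum>q\<in>UNIV. A k l * (B p q * \<Phi> (munit p q) l k))"
      by (simp add: sum_distrib_left)
    also have "\<dots> = (\<Sum>p\<in>UNIV. \<Sum>q\<in>UNIV. \<Sum>k\<in>UNIV. \<Sum>l\<in>UNIV. A k l * (B p q * \<Phi> (munit p q) l k))"
      by (rule swap4)
    also have "\<dots> = (\<Sum>p\<in>UNIV. \<Sum>q\<in>UNIV. B p q * (\<Sum>k\<in>UNIV. \<Sum>l\<in>UNIV. A k l * \<Phi> (munit p q) l k))"
      by (simp add: sum_distrib_left algebra_simps)
    also have "\<dots> = tr (D **\<^sub>m B)"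
      unfolding D_def tr_def mmult_def by (subst sum.swap) (simp add: mult.commute)
    finally show "tr (A **\<^sub>m \<Phi> B) = tr (D **\<^sub>m B)" .
  qed
qed

lemma dual_char:
  fixes \<Phi> :: "'i::finite op \<Rightarrow> 'j::finite op"
  assumes "clinear_map \<Phi>" and "\<forall>B. tr (A **\<^sub>m \<Phi> B) = tr (D **\<^sub>m B)"
  shows "dual_map \<Phi> A = D"
  unfolding dual_map_def
proof (rule the_equality)
  show "\<forall>B. tr (A **\<^sub>m \<Phi> B) = tr (D **\<^sub>m B)" by fact
  fix D' assume "\<forall>B. tr (A **\<^sub>m \<Phi> B) = tr (D' **\<^sub>m B)"
  thus "D' = D" using assms(2) by (intro dual_unique) simp
qed

lemma dual_prop:
  fixes \<Phi> :: "'i::finite op \<Rightarrow> 'j::finite op"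
  assumes "clinear_map \<Phi>"
  shows "tr (A **\<^sub>m \<Phi> B) = tr (dual_map \<Phi> A **\<^sub>m B)"
proof -
  obtain D where D: "\<forall>B. tr (A **\<^sub>m \<Phi> B) = tr (D **\<^sub>m B)" using dual_exists[OF assms] by blast
  show ?thesis using dual_char[OF assms D] D by simp
qed




lemma sum_swap3:
  "(\<Sum>p\<in>A. \<Sum>q\<in>B. \<Sum>m\<in>C. g p q m) = (\<Sum>m\<in>C. \<Sum>p\<in>A. \<Sum>q\<in>B. g p q m)"
proof -
  have "(\<Sum>p\<in>A. \<Sum>q\<in>B. \<Sum>m\<in>C. g p q m) = (\<Sum>p\<in>A. \<Sum>m\<in>C. \<Sum>q\<in>B. g p q m)"
    by (rule sum.cong[OF refl], rule sum.swap)
  also have "\<dots> = (\<Sum>m\<in>C. \<Sum>p\<in>A. \<Sum>q\<in>B. g p q m)" by (rule sum.swap)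
  finally show ?thesis .
qed

lemma sum_perm5:
  "(\<Sum>p\<in>A. \<Sum>q\<in>B. \<Sum>m\<in>C. \<Sum>r\<in>D. \<Sum>s\<in>E. f p q m r s)
   = (\<Sum>m\<in>C. \<Sum>r\<in>D. \<Sum>s\<in>E. \<Sum>p\<in>A. \<Sum>q\<in>B. f p q m r s)"
proof -
  have 1: "(\<Sum>p\<in>A. \<Sum>q\<in>B. \<Sum>m\<in>C. \<Sum>r\<in>D. \<Sum>s\<in>E. f p q m r s)
     = (\<Sum>m\<in>C. \<Sum>p\<in>A. \<Sum>q\<in>B. \<Sum>r\<in>D. \<Sum>s\<in>E. f p q m r s)"
    by (rule sum_swap3)
  have 2: "\<And>m. (\<Sum>p\<in>A. \<Sum>q\<in>B. \<Sum>r\<in>D. \<Sum>s\<in>E. f p q m r s)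
     = (\<Sum>r\<in>D. \<Sum>p\<in>A. \<Sum>q\<in>B. \<Sum>s\<in>E. f p q m r s)"
    by (rule sum_swap3)
  have 3: "\<And>m r. (\<Sum>p\<in>A. \<Sum>q\<in>B. \<Sum>s\<in>E. f p q m r s)
     = (\<Sum>s\<in>E. \<Sum>p\<in>A. \<Sum>q\<in>B. f p q m r s)"
    by (rule sum_swap3)
  show ?thesis unfolding 1 2 3 ..
qed

lemma psd_congr:
  fixes M :: "'p op" and N :: "'r op" and T :: "'m \<Rightarrow> 'p \<Rightarrow> 'r \<Rightarrow> complex"
  assumes N: "psd_on J N"
    and M: "\<And>p q. p \<in> I \<Longrightarrow> q \<in> I \<Longrightarrow> M p q = (\<Sum>m\<in>F. \<Sum>r\<in>J. \<Sum>s\<in>J. T m p r * N r s * cnj (T m q s))"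
  shows "psd_on I M"
proof -
  have eq: "qform I M v = (\<Sum>m\<in>F. qform J N (\<lambda>s. \<Sum>q\<in>I. cnj (T m q s) * v q))" for v
  proof -
    have "qform I M v = (\<Sum>p\<in>I. \<Sum>q\<in>I. cnj (v p) * (\<Sum>m\<in>F. \<Sum>r\<in>J. \<Sum>s\<in>J. T m p r * N r s * cnj (T m q s)) * v q)"
      unfolding qform_def using M by (intro sum.cong refl) simp
    also have "\<dots> = (\<Sum>p\<in>I. \<Sum>q\<in>I. \<Sum>m\<in>F. \<Sum>r\<in>J. \<Sum>s\<in>J. (T m p r * cnj (v p)) * N r s * (cnj (T m q s) * v q))"
      by (simp add: sum_distrib_left sum_distrib_right algebra_simps)
    also have "\<dots> = (\<Sum>m\<in>F. \<Sum>r\<in>J. \<Sum>s\<in>J. \<Sum>p\<in>I. \<Sum>q\<in>I. (T m p r * cnj (v p)) * N r s * (cnj (T m q s) * v q))"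
      by (rule sum_perm5)
    also have "\<dots> = (\<Sum>m\<in>F. qform J N (\<lambda>s. \<Sum>q\<in>I. cnj (T m q s) * v q))"
      unfolding qform_def by (simp add: sum_distrib_left sum_distrib_right cnj_sum algebra_simps)
    finally show ?thesis .
  qed
  have "\<And>w. Im (qform J N w) = 0 \<and> Re (qform J N w) \<ge> 0" using N unfolding psd_on_def by blast
  then show ?thesis unfolding psd_on_def eq by (simp add: Im_sum Re_sum sum_nonneg)
qed




lemma qform_scale: "qform I A (\<lambda>i. complex_of_real t * v i) = complex_of_real (t^2) * qform I A v"
  unfolding qform_def by (simp add: sum_distrib_left algebra_simps power2_eq_square)

lemma pd_lower:
  fixes \<xi> :: "'a::finite op"
  assumes "positive_definite \<xi>"
  shows "\<exists>c>0. \<forall>v. Re (qform UNIV \<xi> v) \<ge> c * (\<Sum>i\<in>UNIV. (cmod (v i))^2)"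
proof -
  define f where "f x = Re (qform UNIV \<xi> (\<lambda>i. x $ i))" for x :: "complex^'a"
  have cont: "continuous_on (sphere 0 1) f"
    unfolding f_def qform_def by (intro continuous_intros)
  obtain x0 where x0: "x0 \<in> sphere 0 1" and min: "\<And>y. y \<in> sphere 0 1 \<Longrightarrow> f x0 \<le> f y"
    using continuous_attains_inf[OF compact_sphere _ cont] by auto
  have "x0 \<noteq> 0" using x0 by auto
  hence "(\<lambda>i. x0 $ i) \<noteq> (\<lambda>_. 0)" by (metis vec_eq_iff zero_index)
  hence cpos: "f x0 > 0" using assms unfolding f_def positive_definite_def by blast
  have "Re (qform UNIV \<xi> v) \<ge> f x0 * (\<Sum>i\<in>UNIV. (cmod (v i))^2)" for v
  proof (cases "v = (\<lambda>_. 0)")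
    case True
    then show ?thesis by (simp add: qform_def)
  next
    case False
    define x where "x = (\<chi> i. v i)"
    have nx: "norm x ^ 2 = (\<Sum>i\<in>UNIV. (cmod (v i))^2)"
      unfolding x_def norm_vec_def L2_set_def by (simp add: sum_nonneg)
    have "x \<noteq> 0" using False unfolding x_def by (metis vec_eq_iff vec_lambda_beta zero_index ext)
    hence npos: "norm x > 0" by simp
    define y where "y = (1 / norm x) *\<^sub>R x"
    have "y \<in> sphere 0 1" unfolding y_def using npos by simp
    hence "f x0 \<le> f y" by (rule min)
    also have "f y = (1 / norm x)^2 * Re (qform UNIV \<xi> v)"
    proof -
      have "(\<lambda>i. y $ i) = (\<lambda>i. complex_of_real (1 / norm x) * v i)"
        unfolding y_def by (simp only: vector_scaleR_component) (simp add: x_def scaleR_conv_of_real)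
      thus ?thesis unfolding f_def by (simp only: qform_scale) simp
    qed
    finally have "f x0 * (norm x)^2 \<le> Re (qform UNIV \<xi> v)"
      using npos by (simp add: field_simps power2_eq_square)
    thus ?thesis using nx by simp
  qed
  thus ?thesis using cpos by blast
qed

lemma qform_bound:
  fixes H :: "'a::finite op"
  shows "cmod (qform UNIV H v) \<le> (\<Sum>i\<in>UNIV. \<Sum>j\<in>UNIV. cmod (H i j)) * (\<Sum>k\<in>UNIV. (cmod (v k))^2)"
proof -
  define N where "N = (\<Sum>k\<in>UNIV. (cmod (v k))^2)"
  have sq: "(cmod (v i))^2 \<le> N" for i unfolding N_def
    by (rule member_le_sum) auto
  have vv: "cmod (v i) * cmod (v j) \<le> N" for i j
  proof -
    have "cmod (v i) * cmod (v j) \<le> ((cmod (v i))^2 + (cmod (v j))^2) / 2"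
      using sum_squares_bound[of "cmod (v i)" "cmod (v j)"] by (simp add: power2_eq_square)
    also have "\<dots> \<le> N" using sq[of i] sq[of j] by simp
    finally show ?thesis .
  qed
  have "cmod (qform UNIV H v) \<le> (\<Sum>i\<in>UNIV. \<Sum>j\<in>UNIV. cmod (cnj (v i) * H i j * v j))"
    unfolding qform_def by (rule order_trans[OF norm_sum], rule sum_mono, rule norm_sum)
  also have "\<dots> \<le> (\<Sum>i\<in>UNIV. \<Sum>j\<in>UNIV. cmod (H i j) * N)"
  proof (intro sum_mono)
    fix i j
    have "cmod (cnj (v i) * H i j * v j) = cmod (H i j) * (cmod (v i) * cmod (v j))"
      by (simp add: norm_mult)
    also have "\<dots> \<le> cmod (H i j) * N" by (rule mult_left_mono[OF vv]) simp
    finally show "cmod (cnj (v i) * H i j * v j) \<le> cmod (H i j) * N" .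
  qed
  also have "\<dots> = (\<Sum>i\<in>UNIV. \<Sum>j\<in>UNIV. cmod (H i j)) * N"
    by (simp add: sum_distrib_right)
  finally show ?thesis unfolding N_def .
qed

definition herm :: "'i op \<Rightarrow> bool" where
  "herm H \<longleftrightarrow> (\<forall>a b. H a b = cnj (H b a))"

lemma herm_qform_real:
  fixes H :: "'a::finite op"
  assumes "herm H"
  shows "Im (qform UNIV H v) = 0"
proof -
  have hh: "cnj (H i j) = H j i" for i j
  proof -
    have "H j i = cnj (H i j)" using assms unfolding herm_def by blast
    thus ?thesis by simp
  qed
  have "cnj (qform UNIV H v) = (\<Sum>i\<in>UNIV. \<Sum>j\<in>UNIV. v i * H j i * cnj (v j))"
    unfolding qform_def by (simp add: cnj_sum hh)
  also have "\<dots> = qform UNIV H v"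
    unfolding qform_def by (subst sum.swap) (simp add: mult.commute mult.left_commute)
  finally have "Im (cnj (qform UNIV H v)) = Im (qform UNIV H v)" by simp
  thus ?thesis by simp
qed

lemma qform_lin: "qform I (\<lambda>a b. A a b + c * B a b) v = qform I A v + c * qform I B v"
  unfolding qform_def by (simp add: algebra_simps sum.distrib sum_distrib_left)

lemma perturb:
  fixes \<xi> H :: "'a::finite op"
  assumes pd: "positive_definite \<xi>" and h: "herm H"
  shows "\<exists>e>0. \<forall>t. \<bar>t\<bar> \<le> e \<longrightarrow> positive_op (\<lambda>a b. \<xi> a b + complex_of_real t * H a b)"
proof -
  obtain c where c: "c > 0" "\<And>v. Re (qform UNIV \<xi> v) \<ge> c * (\<Sum>i\<in>UNIV. (cmod (v i))^2)"
    using pd_lower[OF pd] by blast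
  define K where "K = (\<Sum>i\<in>UNIV. \<Sum>j\<in>UNIV. cmod (H i j))"
  have K0: "K \<ge> 0" unfolding K_def by (simp add: sum_nonneg)
  define e where "e = c / (K + 1)"
  have e0: "e > 0" unfolding e_def using c K0 by simp
  have eK: "e * K \<le> c" unfolding e_def using c K0 by (simp add: field_simps)
  have imx: "\<And>v. Im (qform UNIV \<xi> v) = 0" using pd unfolding positive_definite_def positive_op_def psd_on_def by blast
  show ?thesis
  proof (intro exI conjI allI impI)
    show "e > 0" by fact
    fix t :: real assume t: "\<bar>t\<bar> \<le> e"
    show "positive_op (\<lambda>a b. \<xi> a b + complex_of_real t * H a b)"
      unfolding positive_op_def psd_on_def qform_lin
    proof (intro allI conjI)
      fix v
      show "Im (qform UNIV \<xi> v + complex_of_real t * qform UNIV H v) = 0"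
        using imx[of v] herm_qform_real[OF h, of v] by simp
      define N where "N = (\<Sum>k\<in>UNIV. (cmod (v k))^2)"
      have N0: "N \<ge> 0" unfolding N_def by (simp add: sum_nonneg)
      have "\<bar>Re (qform UNIV H v)\<bar> \<le> K * N"
        using abs_Re_le_cmod[of "qform UNIV H v"] qform_bound[of H v] unfolding K_def N_def by linarith
      hence "\<bar>t * Re (qform UNIV H v)\<bar> \<le> e * (K * N)"
        using t by (simp add: abs_mult mult_mono K0 N0)
      moreover have "e * (K * N) \<le> c * N" using eK N0 by (simp add: mult.assoc[symmetric] mult_right_mono)
      moreover have "Re (qform UNIV \<xi> v) \<ge> c * N" using c(2) unfolding N_def by blast
      ultimately show "0 \<le> Re (qform UNIV \<xi> v + complex_of_real t * qform UNIV H v)"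
        using herm_qform_real[OF h, of v] by simp
    qed
  qed
qed




lemma sum_pair: "(\<Sum>x\<in>(UNIV::('a::finite \<times> 'b::finite) set). f x) = (\<Sum>a\<in>UNIV. \<Sum>b\<in>UNIV. f (a, b))"
  by (simp add: sum.cartesian_product flip: UNIV_Times_UNIV)

lemma ifz_mult[simp]: "(if P then c else 0) * g = (if P then c * g else (0::complex))" by simp
lemma mult_ifz[simp]: "g * (if P then c else 0) = (if P then g * c else (0::complex))" by simp
lemma cnj_ifz[simp]: "cnj (if P then c else 0) = (if P then cnj c else 0)" by simp

lemma ptrace_formula:
  fixes Zx :: "'a::finite op" and M :: "('s::finite \<times> 'a) op"
  shows "ptrace_A ((idop \<otimes>\<^sub>o Zx) **\<^sub>m M) = (\<lambda>i i'. \<Sum>a\<in>UNIV. \<Sum>b\<in>UNIV. Zx a b * M (i, b) (i', a))"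
proof (intro ext)
  fix i i'
  have "ptrace_A ((idop \<otimes>\<^sub>o Zx) **\<^sub>m M) i i' = (\<Sum>a\<in>UNIV. \<Sum>k\<in>UNIV. \<Sum>b\<in>UNIV. (if k = i then 1 * Zx a b * M (k, b) (i', a) else 0))"
    unfolding ptrace_A_def mmult_def tensor_def idop_def
    by (simp add: sum_pair eq_commute[of i])
  also have "\<dots> = (\<Sum>a\<in>UNIV. \<Sum>b\<in>UNIV. Zx a b * M (i, b) (i', a))"
    by (subst sum.swap[of _ UNIV]) (simp add: if_distrib sum.delta cong: if_cong)
  finally show "ptrace_A ((idop \<otimes>\<^sub>o Zx) **\<^sub>m M) i i' = (\<Sum>a\<in>UNIV. \<Sum>b\<in>UNIV. Zx a b * M (i, b) (i', a))" .
qed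

lemma tensor_lin_left:
  "(\<lambda>i j. c * A i j + B i j) \<otimes>\<^sub>o S = (\<lambda>p q. c * (A \<otimes>\<^sub>o S) p q + (B \<otimes>\<^sub>o S) p q)"
  unfolding tensor_def by (intro ext) (auto simp: algebra_simps split: prod.split)

lemma tensor_lin_right:
  "R \<otimes>\<^sub>o (\<lambda>i j. c * A i j + B i j) = (\<lambda>p q. c * (R \<otimes>\<^sub>o A) p q + (R \<otimes>\<^sub>o B) p q)"
  unfolding tensor_def by (intro ext) (auto simp: algebra_simps split: prod.split)

definition phi :: "(('s::finite \<times> 'a::finite) op \<Rightarrow> ('s \<times> 'a) op) \<Rightarrow> 'a op \<Rightarrow> 'a op \<Rightarrow> 's op \<Rightarrow> 's op" where
  "phi E Zx \<sigma> \<rho> = (\<lambda>i i'. \<Sum>a\<in>UNIV. \<Sum>b\<in>UNIV. Zx a b * E (\<rho> \<otimes>\<^sub>o \<sigma>) (i, b) (i', a))"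

lemma phi_ptrace: "ptrace_A ((idop \<otimes>\<^sub>o Zx) **\<^sub>m E (\<rho> \<otimes>\<^sub>o \<sigma>)) = phi E Zx \<sigma> \<rho>"
  unfolding phi_def ptrace_formula ..

lemma clinear_rule:
  assumes "clinear_map \<Phi>"
  shows "\<Phi> (\<lambda>i j. c * A i j + B i j) = (\<lambda>i j. c * \<Phi> A i j + \<Phi> B i j)"
  using assms unfolding clinear_map_def by blast

lemma phi_lin_rho:
  assumes "clinear_map E"
  shows "clinear_map (phi E Zx \<sigma>)"
  unfolding clinear_map_def
proof (intro allI)
  fix A B c
  have "E ((\<lambda>i j. c * A i j + B i j) \<otimes>\<^sub>o \<sigma>) = (\<lambda>p q. c * E (A \<otimes>\<^sub>o \<sigma>) p q + E (B \<otimes>\<^sub>o \<sigma>) p q)"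
    unfolding tensor_lin_left by (rule clinear_rule[OF assms])
  then show "phi E Zx \<sigma> (\<lambda>i j. c * A i j + B i j) = (\<lambda>i j. c * phi E Zx \<sigma> A i j + phi E Zx \<sigma> B i j)"
    unfolding phi_def by (simp add: algebra_simps sum.distrib sum_distrib_left)
qed

lemma phi_lin_sigma:
  assumes "clinear_map E"
  shows "phi E Zx (\<lambda>i j. c * A i j + B i j) \<rho> = (\<lambda>i j. c * phi E Zx A \<rho> i j + phi E Zx B \<rho> i j)"
proof -
  have "E (\<rho> \<otimes>\<^sub>o (\<lambda>i j. c * A i j + B i j)) = (\<lambda>p q. c * E (\<rho> \<otimes>\<^sub>o A) p q + E (\<rho> \<otimes>\<^sub>o B) p q)"
    unfolding tensor_lin_right by (rule clinear_rule[OF assms])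
  then show ?thesis
    unfolding phi_def by (simp add: algebra_simps sum.distrib sum_distrib_left)
qed

lemma ampl_phi:
  "ampl (phi E Zx \<sigma>) X (k, j) (l, j') =
     (\<Sum>a\<in>UNIV. \<Sum>b\<in>UNIV. Zx a b * ampl E (\<lambda>p q. X (fst p, fst (snd p)) (fst q, fst (snd q)) * \<sigma> (snd (snd p)) (snd (snd q))) (k, (j, b)) (l, (j', a)))"
proof -
  have "(\<lambda>p q. X (k, fst p) (l, fst q) * \<sigma> (snd p) (snd q)) = (\<lambda>i i'. X (k, i) (l, i')) \<otimes>\<^sub>o \<sigma>"
    unfolding tensor_def by (intro ext) (auto split: prod.split)
  then show ?thesis unfolding ampl_def phi_def by simp
qed




lemma sum_if_const[simp]: "(\<Sum>s\<in>S. if P then f s else 0) = (if P then (\<Sum>s\<in>S. f s) else (0::complex))"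
  by simp

lemma psd_Y:
  fixes X :: "(nat \<times> 's::finite) op" and \<sigma> :: "'a::finite op"
  assumes X: "psd_on ({..<n} \<times> UNIV) X" and S: "positive_op \<sigma>"
  shows "psd_on ({..<n} \<times> UNIV) (\<lambda>p q. X (fst p, fst (snd p)) (fst q, fst (snd q)) * \<sigma> (snd (snd p)) (snd (snd q)))"
proof -
  obtain W :: "'a \<Rightarrow> 'a \<Rightarrow> complex" where W: "\<And>a b. \<sigma> a b = (\<Sum>m\<in>UNIV. W m a * cnj (W m b))"
    using gram[OF S] by blast
  show ?thesis
  proof (rule psd_congr[OF X, where F=UNIV and T="\<lambda>m p r. if r = (fst p, fst (snd p)) then W m (snd (snd p)) else 0"])
    fix p q :: "nat \<times> 's \<times> 'a"
    assume p: "p \<in> {..<n} \<times> UNIV" and q: "q \<in> {..<n} \<times> UNIV"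
    have "(\<Sum>m\<in>UNIV. \<Sum>r\<in>{..<n} \<times> UNIV. \<Sum>s\<in>{..<n} \<times> UNIV.
       (if r = (fst p, fst (snd p)) then W m (snd (snd p)) else 0) * X r s *
       cnj (if s = (fst q, fst (snd q)) then W m (snd (snd q)) else 0))
      = (\<Sum>m\<in>UNIV. W m (snd (snd p)) * X (fst p, fst (snd p)) (fst q, fst (snd q)) * cnj (W m (snd (snd q))))"
      using p q by (auto simp add: sum.delta mult.assoc mem_Times_iff)
    also have "\<dots> = X (fst p, fst (snd p)) (fst q, fst (snd q)) * \<sigma> (snd (snd p)) (snd (snd q))"
      unfolding W by (simp add: sum_distrib_left algebra_simps)
    finally show "X (fst p, fst (snd p)) (fst q, fst (snd q)) * \<sigma> (snd (snd p)) (snd (snd q)) =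
      (\<Sum>m\<in>UNIV. \<Sum>r\<in>{..<n} \<times> UNIV. \<Sum>s\<in>{..<n} \<times> UNIV.
       (if r = (fst p, fst (snd p)) then W m (snd (snd p)) else 0) * X r s *
       cnj (if s = (fst q, fst (snd q)) then W m (snd (snd q)) else 0))" by simp
  qed
qed

lemma sum_J: "(\<Sum>r\<in>A \<times> (UNIV::('s::finite \<times> 'a::finite) set). g r) = (\<Sum>k\<in>A. \<Sum>j\<in>UNIV. \<Sum>b\<in>UNIV. g (k, (j, b)))"
proof -
  have "(\<Sum>r\<in>A \<times> (UNIV::('s \<times> 'a) set). g r) = (\<Sum>k\<in>A. \<Sum>x\<in>UNIV. g (k, x))"
    by (subst sum.cartesian_product) simp
  also have "\<dots> = (\<Sum>k\<in>A. \<Sum>j\<in>UNIV. \<Sum>b\<in>UNIV. g (k, (j, b)))"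
    by (simp add: sum_pair)
  finally show ?thesis .
qed

lemma phi_cp:
  fixes E :: "('s::finite \<times> 'a::finite) op \<Rightarrow> ('s \<times> 'a) op"
  assumes E: "completely_positive E" and Z: "positive_op Zx" and S: "positive_op \<sigma>"
  shows "completely_positive (phi E Zx \<sigma>)"
  unfolding completely_positive_def
proof (intro conjI allI impI)
  show "clinear_map (phi E Zx \<sigma>)" using E phi_lin_rho unfolding completely_positive_def by blast
  fix n and X :: "(nat \<times> 's) op"
  assume X: "psd_on ({..<n} \<times> UNIV) X"
  define Y where "Y = (\<lambda>p q. X (fst p, fst (snd p)) (fst q, fst (snd q)) * \<sigma> (snd (snd p)) (snd (snd q)))"
  have "psd_on ({..<n} \<times> UNIV) Y" unfolding Y_def by (rule psd_Y[OF X S])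
  hence N: "psd_on ({..<n} \<times> UNIV) (ampl E Y)" using E unfolding completely_positive_def by blast
  obtain W :: "'a \<Rightarrow> 'a \<Rightarrow> complex" where W: "\<And>a b. Zx a b = (\<Sum>m\<in>UNIV. W m a * cnj (W m b))"
    using gram[OF Z] by blast
  show "psd_on ({..<n} \<times> UNIV) (ampl (phi E Zx \<sigma>) X)"
  proof (rule psd_congr[OF N, where F=UNIV and T="\<lambda>m p r. if fst r = fst p then (if fst (snd r) = snd p then cnj (W m (snd (snd r))) else 0) else 0"])
    fix p q :: "nat \<times> 's"
    assume p: "p \<in> {..<n} \<times> UNIV" and q: "q \<in> {..<n} \<times> UNIV"
    obtain k j where pk: "p = (k, j)" and kn: "k < n" using p by auto
    obtain l j' where ql: "q = (l, j')" and ln: "l < n" using q by auto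
    have "(\<Sum>m\<in>UNIV. \<Sum>r\<in>{..<n} \<times> UNIV. \<Sum>s\<in>{..<n} \<times> UNIV.
       (if fst r = fst p then (if fst (snd r) = snd p then cnj (W m (snd (snd r))) else 0) else 0) * ampl E Y r s *
       cnj (if fst s = fst q then (if fst (snd s) = snd q then cnj (W m (snd (snd s))) else 0) else 0))
      = (\<Sum>m\<in>UNIV. \<Sum>b\<in>UNIV. \<Sum>a\<in>UNIV. cnj (W m b) * (ampl E Y (k, (j, b)) (l, (j', a)) * W m a))"
      unfolding sum_J pk ql using kn ln by (simp add: sum.delta mult.assoc)
    also have "\<dots> = (\<Sum>m\<in>UNIV. \<Sum>a\<in>UNIV. \<Sum>b\<in>UNIV. cnj (W m b) * (ampl E Y (k, (j, b)) (l, (j', a)) * W m a))"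
      by (rule sum.cong[OF refl], rule sum.swap)
    also have "\<dots> = (\<Sum>a\<in>UNIV. \<Sum>b\<in>UNIV. \<Sum>m\<in>UNIV. cnj (W m b) * (ampl E Y (k, (j, b)) (l, (j', a)) * W m a))"
      by (rule sum_swap3[symmetric])
    also have "\<dots> = (\<Sum>a\<in>UNIV. \<Sum>b\<in>UNIV. Zx a b * ampl E Y (k, (j, b)) (l, (j', a)))"
      unfolding W by (simp add: sum_distrib_right algebra_simps)
    also have "\<dots> = ampl (phi E Zx \<sigma>) X p q"
      unfolding pk ql ampl_phi Y_def ..
    finally show "ampl (phi E Zx \<sigma>) X p q = (\<Sum>m\<in>UNIV. \<Sum>r\<in>{..<n} \<times> UNIV. \<Sum>s\<in>{..<n} \<times> UNIV.
       (if fst r = fst p then (if fst (snd r) = snd p then cnj (W m (snd (snd r))) else 0) else 0) * ampl E Y r s *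
       cnj (if fst s = fst q then (if fst (snd s) = snd q then cnj (W m (snd (snd s))) else 0) else 0))" by simp
  qed
qed




lemma tr_lin: "tr (\<lambda>i j. c * A i j + B i j) = c * tr A + tr (B :: 'i::finite op)"
  unfolding tr_def by (simp add: sum.distrib sum_distrib_left)

lemma tr_tensor: "tr (\<rho> \<otimes>\<^sub>o \<sigma>) = tr \<rho> * tr (\<sigma> :: 'a::finite op)" for \<rho> :: "'s::finite op"
  unfolding tr_def tensor_def by (simp add: sum_pair sum_product)

lemma phi_tp:
  fixes E :: "('s::finite \<times> 'a::finite) op \<Rightarrow> ('s \<times> 'a) op" and Z :: "'x::finite \<Rightarrow> 'a op"
  assumes tp: "trace_preserving E" and Zs: "(\<lambda>i j. \<Sum>x\<in>UNIV. Z x i j) = idop" and tr1: "tr \<sigma> = 1"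
  shows "tr (\<lambda>i j. \<Sum>x\<in>UNIV. phi E (Z x) \<sigma> \<rho> i j) = tr \<rho>"
proof -
  define N where "N = E (\<rho> \<otimes>\<^sub>o \<sigma>)"
  have zs: "(\<Sum>x\<in>UNIV. Z x a b) = idop a b" for a b using fun_cong[OF fun_cong[OF Zs, of a], of b] by simp
  have "(\<lambda>i j. \<Sum>x\<in>UNIV. phi E (Z x) \<sigma> \<rho> i j) = (\<lambda>i j. \<Sum>a\<in>UNIV. \<Sum>b\<in>UNIV. (\<Sum>x\<in>UNIV. Z x a b) * N (i, b) (j, a))"
  proof (intro ext)
    fix i j
    have "(\<Sum>x\<in>UNIV. phi E (Z x) \<sigma> \<rho> i j) = (\<Sum>x\<in>UNIV. \<Sum>a\<in>UNIV. \<Sum>b\<in>UNIV. Z x a b * N (i, b) (j, a))"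
      unfolding phi_def N_def by simp
    also have "\<dots> = (\<Sum>a\<in>UNIV. \<Sum>b\<in>UNIV. \<Sum>x\<in>UNIV. Z x a b * N (i, b) (j, a))"
      by (rule sum_swap3[symmetric])
    also have "\<dots> = (\<Sum>a\<in>UNIV. \<Sum>b\<in>UNIV. (\<Sum>x\<in>UNIV. Z x a b) * N (i, b) (j, a))"
      by (simp add: sum_distrib_right)
    finally show "(\<Sum>x\<in>UNIV. phi E (Z x) \<sigma> \<rho> i j) = (\<Sum>a\<in>UNIV. \<Sum>b\<in>UNIV. (\<Sum>x\<in>UNIV. Z x a b) * N (i, b) (j, a))" .
  qed
  also have "\<dots> = (\<lambda>i j. \<Sum>a\<in>UNIV. N (i, a) (j, a))"
    unfolding zs idop_def by (intro ext) (simp add: sum.delta)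
  finally have eq: "(\<lambda>i j. \<Sum>x\<in>UNIV. phi E (Z x) \<sigma> \<rho> i j) = (\<lambda>i j. \<Sum>a\<in>UNIV. N (i, a) (j, a))" .
  have "tr (\<lambda>i j. \<Sum>x\<in>UNIV. phi E (Z x) \<sigma> \<rho> i j) = tr N"
    unfolding eq tr_def by (simp add: sum_pair)
  also have "\<dots> = tr \<rho>" unfolding N_def using tp tr1 unfolding trace_preserving_def by (simp add: tr_tensor)
  finally show ?thesis .
qed

lemma tr_ptrace:
  fixes B :: "'s::finite op" and Zx :: "'a::finite op" and N :: "('s \<times> 'a) op"
  shows "tr (B **\<^sub>m ptrace_A ((idop \<otimes>\<^sub>o Zx) **\<^sub>m N)) = tr ((B \<otimes>\<^sub>o Zx) **\<^sub>m N)"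
proof -
  have "tr (B **\<^sub>m ptrace_A ((idop \<otimes>\<^sub>o Zx) **\<^sub>m N)) = (\<Sum>i\<in>UNIV. \<Sum>k\<in>UNIV. \<Sum>a\<in>UNIV. \<Sum>b\<in>UNIV. B i k * (Zx a b * N (k, b) (i, a)))"
    unfolding ptrace_formula unfolding tr_def mmult_def by (simp add: sum_distrib_left)
  also have "\<dots> = (\<Sum>i\<in>UNIV. \<Sum>a\<in>UNIV. \<Sum>k\<in>UNIV. \<Sum>b\<in>UNIV. B i k * (Zx a b * N (k, b) (i, a)))"
    by (rule sum.cong[OF refl], rule sum.swap)
  also have "\<dots> = tr ((B \<otimes>\<^sub>o Zx) **\<^sub>m N)"
    unfolding tr_def mmult_def tensor_def by (simp add: sum_pair mult.assoc)
  finally show ?thesis .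
qed

lemma tr_scale_mult: "tr (B **\<^sub>m (\<lambda>i j. c * M i j)) = c * tr (B **\<^sub>m (M :: 'i::finite op))"
  unfolding tr_def mmult_def by (simp add: sum_distrib_left algebra_simps)

lemma tr_munit_single: "tr (munit a b :: 'i::finite op) = (if a = b then 1 else 0)"
  unfolding tr_def munit_def by (cases "a = b") (auto intro!: sum.neutral)

lemma munit_pair: "munit (i, a) (j, b) = munit i j \<otimes>\<^sub>o munit a b"
  unfolding munit_def tensor_def by (intro ext) (auto split: prod.split)

lemma herm_tr0_zero:
  fixes \<xi> :: "'a::finite op" and E :: "('s::finite \<times> 'a) op \<Rightarrow> ('s \<times> 'a) op" and Z :: "'x::finite \<Rightarrow> 'a op"
    and \<I> :: "'x \<Rightarrow> 's op \<Rightarrow> 's op"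
  assumes ms: "measurement_scheme \<xi> E Z" and pd: "positive_definite \<xi>"
    and Iphi: "\<And>x \<rho>. \<I> x \<rho> = phi E (Z x) \<xi> \<rho>"
    and exI0: "extremal_instrument \<I>"
    and h: "herm H" and trH: "tr H = 0"
  shows "phi E (Z x) H \<rho> = (\<lambda>i j. 0)"
proof -
  have st: "is_state \<xi>" and ch: "channel E" and Zp: "\<And>x. positive_op (Z x)"
    and Zs: "(\<lambda>i j. \<Sum>x\<in>UNIV. Z x i j) = idop"
    using ms unfolding measurement_scheme_def by auto
  have cpE: "completely_positive E" and tpE: "trace_preserving E" using ch unfolding channel_def by auto
  have clE: "clinear_map E" using cpE unfolding completely_positive_def by auto
  have inst: "instrument (\<lambda>x. phi E (Z x) \<sigma>)" if "is_state \<sigma>" for \<sigma>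
    unfolding instrument_def trace_preserving_def
    using phi_cp[OF cpE Zp] phi_tp[OF tpE Zs] that unfolding is_state_def by auto
  obtain e where e: "e > 0" and pos: "\<And>t. \<bar>t\<bar> \<le> e \<Longrightarrow> positive_op (\<lambda>a b. \<xi> a b + complex_of_real t * H a b)"
    using perturb[OF pd h] by blast
  define s1 where "s1 = (\<lambda>a b. complex_of_real e * H a b + \<xi> a b)"
  define s2 where "s2 = (\<lambda>a b. complex_of_real (- e) * H a b + \<xi> a b)"
  have trxi: "tr \<xi> = 1" using st unfolding is_state_def by auto
  have st1: "is_state s1" unfolding is_state_def
  proof
    show "positive_op s1" using pos[of e] e unfolding s1_def by (simp add: add.commute)
    show "tr s1 = 1" unfolding s1_def tr_lin trH trxi by simp
  qed
  have st2: "is_state s2" unfolding is_state_def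
  proof
    show "positive_op s2" using pos[of "-e"] e unfolding s2_def by (simp add: add.commute)
    show "tr s2 = 1" unfolding s2_def tr_lin trH trxi by simp
  qed
  have p1: "phi E (Z x) s1 \<rho> = (\<lambda>i j. complex_of_real e * phi E (Z x) H \<rho> i j + phi E (Z x) \<xi> \<rho> i j)" for x \<rho>
    unfolding s1_def by (rule phi_lin_sigma[OF clE])
  have p2: "phi E (Z x) s2 \<rho> = (\<lambda>i j. complex_of_real (- e) * phi E (Z x) H \<rho> i j + phi E (Z x) \<xi> \<rho> i j)" for x \<rho>
    unfolding s2_def by (rule phi_lin_sigma[OF clE])
  have dec: "\<forall>x \<rho>. \<I> x \<rho> = (\<lambda>i j. complex_of_real (1/2) * phi E (Z x) s1 \<rho> i j
                              + complex_of_real (1 - 1/2) * phi E (Z x) s2 \<rho> i j)"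
    unfolding p1 p2 Iphi by (simp add: algebra_simps)
  have E1: "\<forall>\<I>1 \<I>2 (t::real). instrument \<I>1 \<and> instrument \<I>2 \<and> 0 < t \<and> t < 1 \<and>
        (\<forall>x \<rho>. \<I> x \<rho> = (\<lambda>i j. complex_of_real t * \<I>1 x \<rho> i j
                              + complex_of_real (1 - t) * \<I>2 x \<rho> i j))
        \<longrightarrow> \<I>1 = \<I> \<and> \<I>2 = \<I>" using exI0 unfolding extremal_instrument_def by blast
  have "(\<lambda>x. phi E (Z x) s1) = \<I> \<and> (\<lambda>x. phi E (Z x) s2) = \<I>"
    apply (rule E1[rule_format, where t="1/2"])
    using inst[OF st1] inst[OF st2] dec by simp
  hence "phi E (Z x) s1 \<rho> = \<I> x \<rho>" by (metis conjunct1 fun_cong)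
  hence eq: "(\<lambda>i j. complex_of_real e * phi E (Z x) H \<rho> i j + phi E (Z x) \<xi> \<rho> i j) = phi E (Z x) \<xi> \<rho>"
    unfolding p1 Iphi .
  show ?thesis
  proof (intro ext)
    fix i j
    have "complex_of_real e * phi E (Z x) H \<rho> i j + phi E (Z x) \<xi> \<rho> i j = phi E (Z x) \<xi> \<rho> i j"
      using fun_cong[OF fun_cong[OF eq, of i], of j] by simp
    thus "phi E (Z x) H \<rho> i j = 0" using e by simp
  qed
qed

lemma phi_state_indep:
  fixes \<xi> :: "'a::finite op" and E :: "('s::finite \<times> 'a) op \<Rightarrow> ('s \<times> 'a) op" and Z :: "'x::finite \<Rightarrow> 'a op"
    and \<I> :: "'x \<Rightarrow> 's op \<Rightarrow> 's op"
  assumes ms: "measurement_scheme \<xi> E Z" and pd: "positive_definite \<xi>"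
    and Iphi: "\<And>x \<rho>. \<I> x \<rho> = phi E (Z x) \<xi> \<rho>"
    and exI0: "extremal_instrument \<I>"
  shows "phi E (Z x) \<sigma> \<rho> = (\<lambda>i j. tr \<sigma> * \<I> x \<rho> i j)"
proof -
  have st: "is_state \<xi>" and ch: "channel E"
    using ms unfolding measurement_scheme_def by auto
  have clE: "clinear_map E" using ch unfolding channel_def completely_positive_def by auto
  have trxi: "tr \<xi> = 1" using st unfolding is_state_def by auto
  define \<tau> where "\<tau> = (\<lambda>a b. \<sigma> a b - tr \<sigma> * \<xi> a b)"
  have trt: "tr \<tau> = 0" unfolding \<tau>_def tr_def by (simp add: sum_subtractf sum_distrib_left[symmetric] trxi[unfolded tr_def])
  define H1 where "H1 = (\<lambda>a b. (\<tau> a b + cnj (\<tau> b a)) / 2)"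
  define H2 where "H2 = (\<lambda>a b. (\<tau> a b - cnj (\<tau> b a)) / (2 * \<i>))"
  have h1: "herm H1" unfolding herm_def H1_def by (simp add: add.commute)
  have h2: "herm H2" unfolding herm_def H2_def by (simp add: field_simps)
  have t1: "tr H1 = 0"
  proof -
    have "tr H1 = (tr \<tau> + cnj (tr \<tau>)) / 2" unfolding H1_def tr_def by (simp add: sum.distrib cnj_sum flip: sum_divide_distrib)
    thus ?thesis using trt by simp
  qed
  have t2: "tr H2 = 0"
  proof -
    have "tr H2 = (tr \<tau> - cnj (tr \<tau>)) / (2 * \<i>)" unfolding H2_def tr_def by (simp only: sum_divide_distrib[symmetric] sum_subtractf cnj_sum)
    thus ?thesis using trt by simp
  qed
  have z1: "phi E (Z x) H1 \<rho> = (\<lambda>i j. 0)" by (rule herm_tr0_zero[OF ms pd Iphi exI0 h1 t1])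
  have z2: "phi E (Z x) H2 \<rho> = (\<lambda>i j. 0)" by (rule herm_tr0_zero[OF ms pd Iphi exI0 h2 t2])
  have teq: "\<tau> = (\<lambda>a b. \<i> * H2 a b + H1 a b)" unfolding H1_def H2_def by (intro ext) (simp add: field_simps)
  have zt: "phi E (Z x) \<tau> \<rho> = (\<lambda>i j. 0)" unfolding teq phi_lin_sigma[OF clE] z1 z2 by simp
  have seq: "\<sigma> = (\<lambda>a b. tr \<sigma> * \<xi> a b + \<tau> a b)" unfolding \<tau>_def by simp
  have "phi E (Z x) \<sigma> \<rho> = (\<lambda>i j. tr \<sigma> * phi E (Z x) \<xi> \<rho> i j + phi E (Z x) \<tau> \<rho> i j)"
    by (subst seq, rule phi_lin_sigma[OF clE])
  also have "\<dots> = (\<lambda>i j. tr \<sigma> * \<I> x \<rho> i j)" unfolding zt Iphi by simp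
  finally show ?thesis .
qed

theorem mainTheorem17:
  fixes \<xi> :: "'a::finite op"
    and E :: "('s::finite \<times> 'a) op \<Rightarrow> ('s \<times> 'a) op"
    and Z :: "'x::finite \<Rightarrow> 'a op"
    and \<I> :: "'x \<Rightarrow> 's op \<Rightarrow> 's op"
  assumes "card (UNIV :: 's set) \<ge> 2"
    and "measurement_scheme \<xi> E Z"
    and "third_law_scheme \<xi> E Z"
    and "implements \<xi> E Z \<I>"
    and "extremal_instrument \<I>"
  shows "\<forall>x B. dual_map E (B \<otimes>\<^sub>o Z x) = dual_map (\<I> x) B \<otimes>\<^sub>o idop"
proof (intro allI)
  fix x and B :: "'s op"
  note ms = assms(2) and exI0 = assms(5)
  have pd: "positive_definite \<xi>" using assms(3) unfolding third_law_scheme_def full_rank_state_def by auto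
  have Iphi: "\<And>x \<rho>. \<I> x \<rho> = phi E (Z x) \<xi> \<rho>" using assms(4) unfolding implements_def phi_ptrace by auto
  have clE: "clinear_map E" using ms unfolding measurement_scheme_def channel_def completely_positive_def by auto
  have clI: "clinear_map (\<I> x)" using exI0 unfolding extremal_instrument_def instrument_def completely_positive_def by auto
  define D where "D = dual_map (\<I> x) B"
  show "dual_map E (B \<otimes>\<^sub>o Z x) = D \<otimes>\<^sub>o idop"
  proof (intro ext)
    fix p q :: "'s \<times> 'a"
    obtain j b where p: "p = (j, b)" by (cases p)
    obtain i a where q: "q = (i, a)" by (cases q)
    have "dual_map E (B \<otimes>\<^sub>o Z x) p q = tr (dual_map E (B \<otimes>\<^sub>o Z x) **\<^sub>m munit q p)"
      by (simp add: tr_munit)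
    also have "\<dots> = tr ((B \<otimes>\<^sub>o Z x) **\<^sub>m E (munit q p))" by (simp add: dual_prop[OF clE])
    also have "\<dots> = tr (B **\<^sub>m phi E (Z x) (munit a b) (munit i j))"
      unfolding p q munit_pair tr_ptrace[symmetric] phi_ptrace ..
    also have "\<dots> = tr (munit a b) * tr (B **\<^sub>m \<I> x (munit i j))"
      unfolding phi_state_indep[OF ms pd Iphi exI0] tr_scale_mult ..
    also have "\<dots> = tr (munit a b) * D j i"
      unfolding D_def dual_prop[OF clI] tr_munit ..
    also have "\<dots> = (D \<otimes>\<^sub>o idop) p q"
      unfolding p q tensor_def idop_def tr_munit_single by simp
    finally show "dual_map E (B \<otimes>\<^sub>o Z x) p q = (D \<otimes>\<^sub>o idop) p q" .
  qed
qed


end
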